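(* Let $M,N\ge1$ be integers and let $f_0,\ldots,f_{K-1}$ be distinct functions $\mathbb{Z}_M\to\mathbb{Z}_N$. Define the $K\times K$ matrix $\Gamma$ by $\Gamma_{j'j}=\sum_{x\in\mathbb{Z}_M}\langle f_{j'}(x)|f_j(x)\rangle$, i.e. $\Gamma_{j'j}$ is the number of $x\in\mathbb{Z}_M$ with $f_{j'}(x)=f_j(x)$. Then the standard oracle operators $U_{f_0},\ldots,U_{f_{K-1}}$ are unambiguously distinguishable if and only if $\det\Gamma>0$. Moreover, when $M=N$ and all $f_j$ are permutations of $\mathbb{Z}_M$, the minimal oracle operators $Q_{f_0},\ldots,Q_{f_{K-1}}$ are unambiguously distinguishable if and only if $\det\Gamma>0$.
   Context: Let $\mathcal{H}_M,\mathcal{H}_N$ be Hilbert spaces with orthonormal computational bases $\{|x\rangle\}_{x\in\mathbb{Z}_M}$, $\{|y\rangle\}_{y\in\mathbb{Z}_N}$. For $f:\mathbb{Z}_M\to\mathbb{Z}_N$ the standard oracle operator is the unitary $U_f$ on $\mathcal{H}_M\otimes\mathcal{H}_N$ with $U_f|x\rangle\otimes|y\rangle=|x\rangle\otimes|y\oplus f(x)\rangle$, $\oplus$ being addition mod $N$. For a permutation $f$ of $\mathbb{Z}_M$, the minimal oracle operator is the unitary $Q_f$ on $\mathcal{H}_M$ with $Q_f|x\rangle=|f(x)\rangle$. A finite list of unitary operators $W_1,\ldots,W_K$ on a finite-dimensional Hilbert space $\mathcal{H}$ is called unambiguously distinguishable if there exist a finite-dimensional ancilla space $\mathcal{H}_A$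 and a unit vector $|\psi\rangle\in\mathcal{H}\otimes\mathcal{H}_A$ such that the vectors $(W_j\otimes\mathbb{1}_A)|\psi\rangle$ are linearly independent. *)

theory Defs
  imports Complex_Main "Jordan_Normal_Form.Determinant"
begin

text \<open>A d-dimensional Hilbert space is C^d with computational basis indexed by 0..<d;
  operators are d x d complex matrices. An ancilla of dimension m gives
  H (x) H_A = C^(d*m), basis vector |i> (x) |a> having index i*m + a.\<close>

definition tensor_id_apply :: "complex mat \<Rightarrow> nat \<Rightarrow> complex vec \<Rightarrow> complex vec" where
  "tensor_id_apply W m \<psi> =
     vec (dim_row W * m) (\<lambda>p. \<Sum>k<dim_col W. W $$ (p div m, k) * \<psi> $ (k * m + p mod m))"

definition unit_vec_in :: "nat \<Rightarrow> complex vec \<Rightarrow> bool" where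
  "unit_vec_in n \<psi> \<longleftrightarrow> dim_vec \<psi> = n \<and> (\<Sum>p<n. (cmod (\<psi> $ p))\<^sup>2) = 1"

definition lin_indep_family :: "nat \<Rightarrow> nat \<Rightarrow> (nat \<Rightarrow> complex vec) \<Rightarrow> bool" where
  "lin_indep_family n K v \<longleftrightarrow>
     (\<forall>c :: nat \<Rightarrow> complex. (\<forall>p<n. (\<Sum>j<K. c j * v j $ p) = 0) \<longrightarrow> (\<forall>j<K. c j = 0))"

definition unamb_dist :: "nat \<Rightarrow> complex mat list \<Rightarrow> bool" where
  "unamb_dist d Ws \<longleftrightarrow>
     (\<exists>(m::nat) \<psi>. unit_vec_in (d * m) \<psi> \<and>
        lin_indep_family (d * m) (length Ws) (\<lambda>j. tensor_id_apply (Ws ! j) m \<psi>))"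

text \<open>Standard oracle U_f on H_M (x) H_N = C^(M*N), |x>(x)|y> has index x*N + y.\<close>
definition std_oracle :: "nat \<Rightarrow> nat \<Rightarrow> (nat \<Rightarrow> nat) \<Rightarrow> complex mat" where
  "std_oracle M N f = mat (M * N) (M * N)
     (\<lambda>(r, c). if r = (c div N) * N + (c mod N + f (c div N)) mod N then 1 else 0)"

definition min_oracle :: "nat \<Rightarrow> (nat \<Rightarrow> nat) \<Rightarrow> complex mat" where
  "min_oracle M f = mat M M (\<lambda>(r, c). if r = f c then 1 else 0)"

definition Gamma :: "nat \<Rightarrow> (nat \<Rightarrow> nat) list \<Rightarrow> int mat" where
  "Gamma M fs = mat (length fs) (length fs)
     (\<lambda>(j', j). int (card {x \<in> {0..<M}. (fs ! j') x = (fs ! j) x}))"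

end

theory Submission
  imports Defs "Jordan_Normal_Form.Char_Poly"
begin

lemma sum_split_mult:
  fixes g :: "nat \<Rightarrow> 'a::comm_monoid_add"
  shows "(\<Sum>p<d*m. g p) = (\<Sum>k<d. \<Sum>a<m. g (k*m+a))"
proof -
  have "(\<Sum>p<d*m. g p) = (\<Sum>k<d. sum g {k*m..<k*m+m})"
    by (rule sum.nat_group[symmetric])
  also have "\<dots> = (\<Sum>k<d. \<Sum>a<m. g (k*m+a))"
  proof (rule sum.cong[OF refl])
    fix k
    show "sum g {k*m..<k*m+m} = (\<Sum>a<m. g (k*m+a))"
      using sum.shift_bounds_nat_ivl[of g 0 "k*m" m]
      by (simp add: atLeast0LessThan add.commute)
  qed
  finally show ?thesis .
qed

lemma idx_bound: "r < a \<Longrightarrow> s < b \<Longrightarrow> r*b+s < a*(b::nat)"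
proof -
  assume r: "r < a" and s: "s < b"
  have "(r+1)*b \<le> a*b" using r by (intro mult_le_mono1) simp
  then show ?thesis using s by simp
qed

lemma ud_iff:
  assumes d: "d \<ge> 1" and W: "\<forall>j<length Ws. Ws!j \<in> carrier_mat d d"
  shows "unamb_dist d Ws \<longleftrightarrow>
    (\<forall>c. (\<forall>r<d. \<forall>s<d. (\<Sum>j<length Ws. c j * Ws!j $$ (r,s)) = 0) \<longrightarrow> (\<forall>j<length Ws. c j = 0))"
proof
  assume "unamb_dist d Ws"
  then obtain m \<psi> where u: "unit_vec_in (d * m) \<psi>"
    and li: "lin_indep_family (d * m) (length Ws) (\<lambda>j. tensor_id_apply (Ws ! j) m \<psi>)"
    unfolding unamb_dist_def by auto
  show "\<forall>c. (\<forall>r<d. \<forall>s<d. (\<Sum>j<length Ws. c j * Ws!j $$ (r,s)) = 0) \<longrightarrow> (\<forall>j<length Ws. c j = 0)"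
  proof (rule allI, rule impI)
    fix c assume H: "\<forall>r<d. \<forall>s<d. (\<Sum>j<length Ws. c j * Ws!j $$ (r,s)) = 0"
    have "\<forall>p<d*m. (\<Sum>j<length Ws. c j * tensor_id_apply (Ws ! j) m \<psi> $ p) = 0"
    proof (intro allI impI)
      fix p assume p: "p < d*m"
      have pd: "p div m < d" using p by (simp add: less_mult_imp_div_less)
      have "(\<Sum>j<length Ws. c j * tensor_id_apply (Ws ! j) m \<psi> $ p)
          = (\<Sum>j<length Ws. c j * (\<Sum>k<d. Ws!j $$ (p div m, k) * \<psi> $ (k * m + p mod m)))"
        using W p by (intro sum.cong refl) (auto simp: tensor_id_apply_def)
      also have "\<dots> = (\<Sum>k<d. (\<Sum>j<length Ws. c j * Ws!j $$ (p div m, k)) * \<psi> $ (k * m + p mod m))"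
        by (simp add: sum_distrib_left sum_distrib_right mult.assoc sum.swap[of _ "{..<d}"])
      also have "\<dots> = 0" using H pd by simp
      finally show "(\<Sum>j<length Ws. c j * tensor_id_apply (Ws ! j) m \<psi> $ p) = 0" .
    qed
    then show "\<forall>j<length Ws. c j = 0" using li unfolding lin_indep_family_def by blast
  qed
next
  assume H: "\<forall>c. (\<forall>r<d. \<forall>s<d. (\<Sum>j<length Ws. c j * Ws!j $$ (r,s)) = 0) \<longrightarrow> (\<forall>j<length Ws. c j = 0)"
  define \<alpha> :: complex where "\<alpha> = of_real (1 / sqrt (real d))"
  have \<alpha>0: "\<alpha> \<noteq> 0" using d by (simp add: \<alpha>_def)
  define \<psi> where "\<psi> = vec (d*d) (\<lambda>q. if q div d = q mod d then \<alpha> else 0)"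
  have \<psi>: "\<psi> $ (k*d+a) = (if k = a then \<alpha> else 0)" if "k < d" "a < d" for k a
  proof -
    have "k*d+a < d*d" using that by (rule idx_bound)
    then show ?thesis using that by (simp add: \<psi>_def)
  qed
  have unit: "unit_vec_in (d * d) \<psi>"
  proof -
    have "(\<Sum>p<d*d. (cmod (\<psi> $ p))\<^sup>2) = (\<Sum>k<d. \<Sum>a<d. (cmod (\<psi> $ (k*d+a)))\<^sup>2)"
      by (rule sum_split_mult)
    also have "\<dots> = (\<Sum>k<d. \<Sum>a<d. if k = a then (cmod \<alpha>)\<^sup>2 else 0)"
      by (intro sum.cong refl) (simp add: \<psi>)
    also have "\<dots> = real d * (cmod \<alpha>)\<^sup>2" by simp
    also have "\<dots> = 1"
    proof -
      have "cmod \<alpha> = 1 / sqrt (real d)" unfolding \<alpha>_def norm_of_real by simp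
      then show ?thesis using d by (simp add: power_divide)
    qed
    finally show ?thesis unfolding unit_vec_in_def by (simp add: \<psi>_def)
  qed
  have T: "tensor_id_apply (Ws ! j) d \<psi> $ (r*d+s) = Ws!j $$ (r, s) * \<alpha>"
    if j: "j < length Ws" and r: "r < d" and s: "s < d" for j r s
  proof -
    have rs: "r*d+s < d*d" using r s by (rule idx_bound)
    have "tensor_id_apply (Ws ! j) d \<psi> $ (r*d+s) = (\<Sum>k<d. Ws!j $$ (r, k) * \<psi> $ (k * d + s))"
    proof -
      have "dim_row (Ws!j) = d" "dim_col (Ws!j) = d" using W j by auto
      moreover have "(r*d+s) div d = r" "(r*d+s) mod d = s" using s by auto
      ultimately show ?thesis using rs by (simp add: tensor_id_apply_def)
    qed
    also have "\<dots> = (\<Sum>k<d. if k = s then Ws!j $$ (r, k) * \<alpha> else 0)"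
      using s by (intro sum.cong refl) (simp add: \<psi>)
    also have "\<dots> = Ws!j $$ (r, s) * \<alpha>" using s by simp
    finally show ?thesis .
  qed
  have "lin_indep_family (d * d) (length Ws) (\<lambda>j. tensor_id_apply (Ws ! j) d \<psi>)"
    unfolding lin_indep_family_def
  proof (rule allI, rule impI)
    fix c assume A: "\<forall>p<d*d. (\<Sum>j<length Ws. c j * tensor_id_apply (Ws ! j) d \<psi> $ p) = 0"
    have "\<forall>r<d. \<forall>s<d. (\<Sum>j<length Ws. c j * Ws!j $$ (r,s)) = 0"
    proof (intro allI impI)
      fix r s assume r: "r < d" and s: "s < d"
      have rs: "r*d+s < d*d" using r s by (rule idx_bound)
      have "0 = (\<Sum>j<length Ws. c j * tensor_id_apply (Ws ! j) d \<psi> $ (r*d+s))" using A rs by simp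
      also have "\<dots> = (\<Sum>j<length Ws. c j * Ws!j $$ (r,s)) * \<alpha>"
        using T r s by (simp add: sum_distrib_right mult.assoc)
      finally show "(\<Sum>j<length Ws. c j * Ws!j $$ (r,s)) = 0" using \<alpha>0 by simp
    qed
    then show "\<forall>j<length Ws. c j = 0" using H by blast
  qed
  then show "unamb_dist d Ws" using unit unfolding unamb_dist_def by blast
qed

definition gcond :: "nat \<Rightarrow> nat \<Rightarrow> (nat \<Rightarrow> nat) list \<Rightarrow> (nat \<Rightarrow> complex) \<Rightarrow> bool" where
  "gcond M N fs c \<longleftrightarrow> (\<forall>x<M. \<forall>v<N. (\<Sum>j<length fs. c j * (if (fs!j) x = v then 1 else 0)) = 0)"

lemma modeq:
  fixes r y a N :: nat
  assumes rN: "r < N" and yN: "y < N" and aN: "a < N"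
  shows "(r = (y + a) mod N) \<longleftrightarrow> (a = (r + N - y) mod N)"
proof -
  have A: "(r + N - y) mod N = (if y \<le> r then r - y else r + N - y)"
  proof (cases "y \<le> r")
    case True
    have "(r + N - y) mod N = (r - y + N) mod N" by (simp only: add_diff_assoc2[OF True])
    also have "\<dots> = (r - y) mod N" by (rule mod_add_self2)
    also have "\<dots> = r - y" using rN by simp
    finally show ?thesis using True by simp
  next
    case False
    have "r + N - y < N" using False rN by linarith
    then show ?thesis using False by simp
  qed
  have B: "(y + a) mod N = (if y + a < N then y + a else y + a - N)"
  proof (cases "y + a < N")
    case True then show ?thesis by simp
  next
    case False
    have "(y + a) mod N = (y + a - N) mod N" using False by (simp add: le_mod_geq)
    also have "\<dots> = y + a - N" using yN aN by simp
    finally show ?thesis using False by simp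
  qed
  show ?thesis unfolding A B using rN yN aN by auto
qed

lemma std_cond:
  assumes N: "N \<ge> 1" and F: "\<forall>j < length fs. \<forall>x < M. (fs ! j) x < N"
  shows "(\<forall>r<M*N. \<forall>s<M*N. (\<Sum>j<length (map (std_oracle M N) fs).
            c j * (map (std_oracle M N) fs ! j) $$ (r,s)) = 0) \<longleftrightarrow> gcond M N fs c"
proof -
  have ent: "(map (std_oracle M N) fs ! j) $$ (r,s) =
      (if r = (s div N) * N + (s mod N + (fs!j) (s div N)) mod N then 1 else 0)"
    if "j < length fs" "r < M*N" "s < M*N" for j r s
    using that by (simp add: std_oracle_def)
  show ?thesis
  proof
    assume H: "\<forall>r<M*N. \<forall>s<M*N. (\<Sum>j<length (map (std_oracle M N) fs).
            c j * (map (std_oracle M N) fs ! j) $$ (r,s)) = 0"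
    show "gcond M N fs c" unfolding gcond_def
    proof (intro allI impI)
      fix x v assume x: "x < M" and v: "v < N"
      have r: "x*N+v < M*N" using x v by (rule idx_bound)
      have s: "x*N+0 < M*N" using x N by (intro idx_bound) auto
      have "0 = (\<Sum>j<length fs. c j * (map (std_oracle M N) fs ! j) $$ (x*N+v, x*N+0))"
        using H r s by simp
      also have "\<dots> = (\<Sum>j<length fs. c j * (if (fs!j) x = v then 1 else 0))"
      proof (intro sum.cong refl)
        fix j assume j: "j \<in> {..<length fs}"
        have fx: "(fs!j) x < N" using F j x by auto
        have "(x*N+0) div N = x" "(x*N+0) mod N = 0" using N by auto
        then show "c j * (map (std_oracle M N) fs ! j) $$ (x*N+v, x*N+0) =
                   c j * (if (fs!j) x = v then 1 else 0)"
          using ent[of j "x*N+v" "x*N+0"] j r s fx by auto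
      qed
      finally show "(\<Sum>j<length fs. c j * (if (fs!j) x = v then 1 else 0)) = 0" by simp
    qed
  next
    assume G: "gcond M N fs c"
    show "\<forall>r<M*N. \<forall>s<M*N. (\<Sum>j<length (map (std_oracle M N) fs).
            c j * (map (std_oracle M N) fs ! j) $$ (r,s)) = 0"
    proof (intro allI impI)
      fix r s assume r: "r < M*N" and s: "s < M*N"
      define x where "x = s div N"
      define y where "y = s mod N"
      have x: "x < M" using s unfolding x_def by (simp add: less_mult_imp_div_less)
      have y: "y < N" using N unfolding y_def by simp
      show "(\<Sum>j<length (map (std_oracle M N) fs). c j * (map (std_oracle M N) fs ! j) $$ (r,s)) = 0"
      proof (cases "r div N = x")
        case False
        have "(\<Sum>j<length fs. c j * (map (std_oracle M N) fs ! j) $$ (r,s)) = (\<Sum>j<length fs. 0)"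
        proof (intro sum.cong refl)
          fix j assume j: "j \<in> {..<length fs}"
          have "r \<noteq> x * N + (y + (fs!j) x) mod N"
          proof
            assume "r = x * N + (y + (fs!j) x) mod N"
            then have "r div N = x" using N by simp
            then show False using False by simp
          qed
          then show "c j * (map (std_oracle M N) fs ! j) $$ (r,s) = 0"
            using ent[of j r s] j r s unfolding x_def y_def by auto
        qed
        then show ?thesis by simp
      next
        case True
        define v where "v = (r mod N + N - y) mod N"
        have v: "v < N" using N unfolding v_def by simp
        have rr: "r = x * N + r mod N" using True div_mult_mod_eq[of r N] by simp
        have "(\<Sum>j<length fs. c j * (map (std_oracle M N) fs ! j) $$ (r,s)) =
              (\<Sum>j<length fs. c j * (if (fs!j) x = v then 1 else 0))"
        proof (intro sum.cong refl)
          fix j assume j: "j \<in> {..<length fs}"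
          have fx: "(fs!j) x < N" using F j x by auto
          have "(r = x * N + (y + (fs!j) x) mod N) \<longleftrightarrow> (r mod N = (y + (fs!j) x) mod N)"
          proof
            assume "r = x * N + (y + (fs!j) x) mod N"
            then have "r mod N = (x * N + (y + (fs!j) x) mod N) mod N" by simp
            also have "\<dots> = (y + (fs!j) x) mod N" by simp
            finally show "r mod N = (y + (fs!j) x) mod N" .
          next
            assume "r mod N = (y + (fs!j) x) mod N"
            then show "r = x * N + (y + (fs!j) x) mod N" using rr by linarith
          qed
          also have "\<dots> \<longleftrightarrow> ((fs!j) x = v)" unfolding v_def
            using modeq[of "r mod N" N y "(fs!j) x"] N y fx by simp
          finally show "c j * (map (std_oracle M N) fs ! j) $$ (r,s) = c j * (if (fs!j) x = v then 1 else 0)"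
            using ent[of j r s] j r s unfolding x_def y_def by auto
        qed
        also have "\<dots> = 0" using G x v unfolding gcond_def by blast
        finally show ?thesis by simp
      qed
    qed
  qed
qed

lemma min_cond:
  shows "(\<forall>r<M. \<forall>s<M. (\<Sum>j<length (map (min_oracle M) fs).
            c j * (map (min_oracle M) fs ! j) $$ (r,s)) = 0) \<longleftrightarrow> gcond M M fs c"
proof -
  have "(\<forall>r<M. \<forall>s<M. (\<Sum>j<length (map (min_oracle M) fs).
            c j * (map (min_oracle M) fs ! j) $$ (r,s)) = 0) \<longleftrightarrow>
        (\<forall>r<M. \<forall>s<M. (\<Sum>j<length fs. c j * (if (fs!j) s = r then 1 else 0)) = 0)"
  proof (intro iff_allI imp_cong refl)
    fix r s assume "r < M" "s < M"
    then show "((\<Sum>j<length (map (min_oracle M) fs). c j * (map (min_oracle M) fs ! j) $$ (r,s)) = 0) =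
          ((\<Sum>j<length fs. c j * (if (fs!j) s = r then 1 else 0)) = 0)"
      by (auto intro!: arg_cong[where f="\<lambda>x. x = 0"] sum.cong simp: min_oracle_def)
  qed
  then show ?thesis unfolding gcond_def by blast
qed

definition ind :: "(nat \<Rightarrow> nat) list \<Rightarrow> nat \<Rightarrow> nat \<Rightarrow> nat \<Rightarrow> complex" where
  "ind fs j x w = (if (fs!j) x = w then 1 else 0)"

definition Ssum :: "(nat \<Rightarrow> nat) list \<Rightarrow> (nat \<Rightarrow> complex) \<Rightarrow> nat \<Rightarrow> nat \<Rightarrow> complex" where
  "Ssum fs c x w = (\<Sum>j<length fs. c j * ind fs j x w)"

lemma gcond_Ssum: "gcond M N fs c \<longleftrightarrow> (\<forall>x<M. \<forall>w<N. Ssum fs c x w = 0)"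
  unfolding gcond_def Ssum_def ind_def by simp

lemma cnj_Ssum: "cnj (Ssum fs c x w) = Ssum fs (\<lambda>j. cnj (c j)) x w"
  unfolding Ssum_def ind_def by (auto intro: sum.cong)

lemma cnj_mult_self: "cnj z * z = complex_of_real ((cmod z)\<^sup>2)"
  by (metis complex_norm_square mult.commute)

lemma poly_lin_prod_0: "poly (\<Prod>a\<leftarrow>as. [:- a, 1:]) 0 = (\<Prod>a\<leftarrow>as. - a)"
  by (induct as) simp_all

lemma prod_list_neg: "(\<Prod>a\<leftarrow>as. - (a::complex)) = (-1) ^ length as * prod_list as"
  by (induct as) simp_all

lemma poly_lin_prod_root: "a \<in> set as \<Longrightarrow> poly (\<Prod>b\<leftarrow>as. [:- b, 1:]) (a::complex) = 0"
  by (induct as) auto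

lemma prod_list_nonneg_complex:
  "\<forall>a\<in>set as. Im a = 0 \<and> Re a \<ge> 0 \<Longrightarrow> Im (prod_list as) = 0 \<and> Re (prod_list as) \<ge> 0"
  by (induct as) auto

lemma card_as_sum: "finite A \<Longrightarrow> (of_nat (card {x\<in>A. P x}) :: complex) = (\<Sum>x\<in>A. if P x then 1 else 0)"
  by (simp add: sum.inter_filter[symmetric])

context
  fixes M N :: nat and fs :: "(nat \<Rightarrow> nat) list"
  assumes F: "\<forall>j<length fs. \<forall>x<M. (fs!j) x < N"
begin

lemma G1:
  assumes i: "i < length fs" and j: "j < length fs"
  shows "(of_int (Gamma M fs $$ (i,j)) :: complex) = (\<Sum>x<M. \<Sum>w<N. ind fs i x w * ind fs j x w)"
proof -
  have "(of_int (Gamma M fs $$ (i,j)) :: complex) = of_nat (card {x \<in> {0..<M}. (fs ! i) x = (fs ! j) x})"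
    using i j by (simp add: Gamma_def)
  also have "\<dots> = (\<Sum>x\<in>{0..<M}. if (fs ! i) x = (fs ! j) x then 1 else 0)"
    by (rule card_as_sum) simp
  also have "\<dots> = (\<Sum>x<M. \<Sum>w<N. ind fs i x w * ind fs j x w)"
    unfolding atLeast0LessThan
  proof (intro sum.cong refl)
    fix x assume x: "x \<in> {..<M}"
    have fx: "(fs!i) x < N" using F i x by auto
    have "(\<Sum>w<N. ind fs i x w * ind fs j x w) = (\<Sum>w<N. if (fs!i) x = w then (if (fs!j) x = w then 1 else 0) else 0)"
      unfolding ind_def by (intro sum.cong refl) auto
    also have "\<dots> = (if (fs ! i) x = (fs ! j) x then 1 else 0)"
      using fx by (simp add: sum.delta)
    finally show "(if (fs ! i) x = (fs ! j) x then 1 else 0) = (\<Sum>w<N. ind fs i x w * ind fs j x w)" by simp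
  qed
  finally show ?thesis .
qed

abbreviation "Gc \<equiv> map_mat (of_int :: int \<Rightarrow> complex) (Gamma M fs)"

lemma Gc_carrier: "Gc \<in> carrier_mat (length fs) (length fs)"
  by (simp add: Gamma_def)

lemma Zv:
  assumes v: "v \<in> carrier_vec (length fs)" and i: "i < length fs"
  shows "(Gc *\<^sub>v v) $ i = (\<Sum>x<M. \<Sum>w<N. ind fs i x w * Ssum fs (\<lambda>j. v$j) x w)"
proof -
  have "(Gc *\<^sub>v v) $ i = (\<Sum>j<length fs. Gc $$ (i,j) * v$j)"
    using v i by (simp add: mult_mat_vec_def scalar_prod_def Gamma_def atLeast0LessThan)
  also have "\<dots> = (\<Sum>j<length fs. (\<Sum>x<M. \<Sum>w<N. ind fs i x w * ind fs j x w) * v$j)"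
    using i by (intro sum.cong refl) (simp add: G1[symmetric] Gamma_def)
  also have "\<dots> = (\<Sum>j<length fs. \<Sum>x<M. \<Sum>w<N. ind fs i x w * (v$j * ind fs j x w))"
    by (simp add: sum_distrib_right sum_distrib_left mult_ac)
  also have "\<dots> = (\<Sum>x<M. \<Sum>j<length fs. \<Sum>w<N. ind fs i x w * (v$j * ind fs j x w))"
    by (rule sum.swap)
  also have "\<dots> = (\<Sum>x<M. \<Sum>w<N. \<Sum>j<length fs. ind fs i x w * (v$j * ind fs j x w))"
    by (intro sum.cong refl sum.swap)
  also have "\<dots> = (\<Sum>x<M. \<Sum>w<N. ind fs i x w * Ssum fs (\<lambda>j. v$j) x w)"
    unfolding Ssum_def by (simp add: sum_distrib_left)
  finally show ?thesis .
qed

lemma Qf: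
  assumes v: "v \<in> carrier_vec (length fs)"
  shows "(\<Sum>i<length fs. cnj (v$i) * (Gc *\<^sub>v v) $ i)
        = of_real (\<Sum>x<M. \<Sum>w<N. (cmod (Ssum fs (\<lambda>j. v$j) x w))\<^sup>2)"
proof -
  have "(\<Sum>i<length fs. cnj (v$i) * (Gc *\<^sub>v v) $ i)
      = (\<Sum>i<length fs. cnj (v$i) * (\<Sum>x<M. \<Sum>w<N. ind fs i x w * Ssum fs (\<lambda>j. v$j) x w))"
    using v by (intro sum.cong refl) (simp add: Zv)
  also have "\<dots> = (\<Sum>i<length fs. \<Sum>x<M. \<Sum>w<N. (cnj (v$i) * ind fs i x w) * Ssum fs (\<lambda>j. v$j) x w)"
    by (simp add: sum_distrib_left mult_ac)
  also have "\<dots> = (\<Sum>x<M. \<Sum>i<length fs. \<Sum>w<N. (cnj (v$i) * ind fs i x w) * Ssum fs (\<lambda>j. v$j) x w)"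
    by (rule sum.swap)
  also have "\<dots> = (\<Sum>x<M. \<Sum>w<N. \<Sum>i<length fs. (cnj (v$i) * ind fs i x w) * Ssum fs (\<lambda>j. v$j) x w)"
    by (intro sum.cong refl sum.swap)
  also have "\<dots> = (\<Sum>x<M. \<Sum>w<N. Ssum fs (\<lambda>j. cnj (v$j)) x w * Ssum fs (\<lambda>j. v$j) x w)"
    unfolding Ssum_def[of fs "\<lambda>j. cnj (v$j)"] by (simp add: sum_distrib_right)
  also have "\<dots> = (\<Sum>x<M. \<Sum>w<N. of_real ((cmod (Ssum fs (\<lambda>j. v$j) x w))\<^sup>2))"
    by (intro sum.cong refl) (simp only: cnj_Ssum[symmetric] cnj_mult_self)
  also have "\<dots> = of_real (\<Sum>x<M. \<Sum>w<N. (cmod (Ssum fs (\<lambda>j. v$j) x w))\<^sup>2)"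
    by simp
  finally show ?thesis .
qed

lemma detGc: "det Gc = of_int (det (Gamma M fs))"
  by (rule of_int_hom.hom_det)

lemma Ssum_vec: "Ssum fs (\<lambda>j. vec (length fs) c $ j) x w = Ssum fs c x w"
  unfolding Ssum_def by (intro sum.cong refl) simp

lemma indep_iff_det_ne0:
  "(\<forall>c. gcond M N fs c \<longrightarrow> (\<forall>j<length fs. c j = 0)) \<longleftrightarrow> det (Gamma M fs) \<noteq> 0"
proof
  assume I: "\<forall>c. gcond M N fs c \<longrightarrow> (\<forall>j<length fs. c j = 0)"
  show "det (Gamma M fs) \<noteq> 0"
  proof
    assume "det (Gamma M fs) = 0"
    then have "det Gc = 0" by (simp add: detGc)
    then obtain v where v: "v \<in> carrier_vec (length fs)" and v0: "v \<noteq> 0\<^sub>v (length fs)"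
      and Gv: "Gc *\<^sub>v v = 0\<^sub>v (length fs)"
      using det_0_iff_vec_prod_zero[OF Gc_carrier] by auto
    have "(\<Sum>i<length fs. cnj (v$i) * (Gc *\<^sub>v v) $ i) = 0" using Gv by simp
    then have "complex_of_real (\<Sum>x<M. \<Sum>w<N. (cmod (Ssum fs (\<lambda>j. v$j) x w))\<^sup>2) = 0"
      by (simp only: Qf[OF v])
    then have R: "(\<Sum>x<M. \<Sum>w<N. (cmod (Ssum fs (\<lambda>j. v$j) x w))\<^sup>2) = 0"
      by (simp only: of_real_eq_0_iff)
    have "\<forall>x<M. \<forall>w<N. Ssum fs (\<lambda>j. v$j) x w = 0"
    proof (intro allI impI)
      fix x w assume x: "x < M" and w: "w < N"
      have nn: "\<And>x. x\<in>{..<M} \<Longrightarrow> 0 \<le> (\<Sum>w<N. (cmod (Ssum fs (\<lambda>j. v$j) x w))\<^sup>2)"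
        by (intro sum_nonneg) simp
      have "\<forall>x\<in>{..<M}. (\<Sum>w<N. (cmod (Ssum fs (\<lambda>j. v$j) x w))\<^sup>2) = 0"
        using R sum_nonneg_eq_0_iff[of "{..<M}" "\<lambda>x. (\<Sum>w<N. (cmod (Ssum fs (\<lambda>j. v$j) x w))\<^sup>2)", OF finite_lessThan nn] by blast
      then have S0: "(\<Sum>w<N. (cmod (Ssum fs (\<lambda>j. v$j) x w))\<^sup>2) = 0" using x by blast
      have nn2: "\<And>w. w\<in>{..<N} \<Longrightarrow> 0 \<le> (cmod (Ssum fs (\<lambda>j. v$j) x w))\<^sup>2" by simp
      have "(cmod (Ssum fs (\<lambda>j. v$j) x w))\<^sup>2 = 0"
        using S0 sum_nonneg_eq_0_iff[of "{..<N}" "\<lambda>w. (cmod (Ssum fs (\<lambda>j. v$j) x w))\<^sup>2", OF finite_lessThan nn2] w by blast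
      then show "Ssum fs (\<lambda>j. v$j) x w = 0" by simp
    qed
    then have "gcond M N fs (\<lambda>j. v$j)" by (simp add: gcond_Ssum)
    then have "\<forall>j<length fs. v$j = 0" using I by blast
    then have "v = 0\<^sub>v (length fs)" using v by (intro eq_vecI) auto
    then show False using v0 by simp
  qed
next
  assume D: "det (Gamma M fs) \<noteq> 0"
  show "\<forall>c. gcond M N fs c \<longrightarrow> (\<forall>j<length fs. c j = 0)"
  proof (intro allI impI)
    fix c j assume G: "gcond M N fs c" and j: "j < length fs"
    define v where "v = vec (length fs) c"
    have v: "v \<in> carrier_vec (length fs)" unfolding v_def by simp
    have "Gc *\<^sub>v v = 0\<^sub>v (length fs)"
    proof (rule eq_vecI)
      fix i assume i: "i < dim_vec (0\<^sub>v (length fs) :: complex vec)"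
      then have i': "i < length fs" by simp
      have "\<forall>x<M. \<forall>w<N. Ssum fs c x w = 0" using G unfolding gcond_Ssum .
      then have "\<forall>x<M. \<forall>w<N. Ssum fs (\<lambda>j. v$j) x w = 0" unfolding v_def Ssum_vec .
      then have "(Gc *\<^sub>v v) $ i = 0" unfolding Zv[OF v i'] by simp
      then show "(Gc *\<^sub>v v) $ i = 0\<^sub>v (length fs) $ i" using i' by simp
    qed (simp add: Gamma_def)
    moreover have "det Gc \<noteq> 0" using D by (simp add: detGc)
    ultimately have "v = 0\<^sub>v (length fs)"
      using det_0_iff_vec_prod_zero[OF Gc_carrier] v by blast
    then have "v $ j = 0" using j by simp
    then show "c j = 0" using j unfolding v_def by simp
  qed
qed

lemma eig_nonneg:
  assumes "eigenvalue Gc a"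
  shows "Im a = 0 \<and> Re a \<ge> 0"
proof -
  obtain v where v: "v \<in> carrier_vec (length fs)" and v0: "v \<noteq> 0\<^sub>v (length fs)"
    and Av: "Gc *\<^sub>v v = a \<cdot>\<^sub>v v"
    using assms unfolding eigenvalue_def eigenvector_def by (auto simp: Gamma_def)
  define R where "R = (\<Sum>x<M. \<Sum>w<N. (cmod (Ssum fs (\<lambda>j. v$j) x w))\<^sup>2)"
  define P where "P = (\<Sum>i<length fs. (cmod (v$i))\<^sup>2)"
  have R0: "R \<ge> 0" unfolding R_def by (intro sum_nonneg) auto
  obtain i where i: "i < length fs" and vi: "v$i \<noteq> 0"
  proof -
    { assume "\<forall>i<length fs. v$i = 0"
      then have "v = 0\<^sub>v (length fs)" using v by (intro eq_vecI) auto
      with v0 have False by simp }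
    then show ?thesis using that by blast
  qed
  have P0: "P > 0" unfolding P_def
    by (rule sum_pos2[of _ i]) (use i vi in auto)
  have "of_real R = (\<Sum>i<length fs. cnj (v$i) * (Gc *\<^sub>v v) $ i)"
    unfolding R_def by (rule Qf[OF v, symmetric])
  also have "\<dots> = (\<Sum>i<length fs. a * (cnj (v$i) * v$i))"
    using v by (intro sum.cong refl) (simp add: Av mult_ac)
  also have "\<dots> = a * of_real P"
    unfolding P_def by (simp add: sum_distrib_left cnj_mult_self)
  finally have "a = of_real (R / P)" using P0 by (simp add: field_simps)
  then show ?thesis using R0 P0 by simp
qed

lemma det_nonneg: "det (Gamma M fs) \<ge> 0"
proof -
  obtain as where cp: "char_poly Gc = (\<Prod>a\<leftarrow>as. [:- a, 1:])" and len: "length as = length fs"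
    using char_poly_factorized[OF Gc_carrier] by blast
  have neg: "- (char_matrix Gc 0) = (-1) \<cdot>\<^sub>m Gc"
    by (rule eq_matI) (auto simp: char_matrix_def Gamma_def)
  have "(-1) ^ length fs * det Gc = det (- (char_matrix Gc 0))"
    unfolding neg by (simp add: Gamma_def)
  also have "\<dots> = poly (char_poly Gc) 0" by (rule char_poly_matrix[OF Gc_carrier, symmetric])
  also have "\<dots> = (-1) ^ length fs * prod_list as"
    unfolding cp poly_lin_prod_0 prod_list_neg len ..
  finally have dp: "det Gc = prod_list as" by simp
  have "\<forall>a\<in>set as. Im a = 0 \<and> Re a \<ge> 0"
  proof
    fix a assume "a \<in> set as"
    then have "poly (char_poly Gc) a = 0" unfolding cp by (rule poly_lin_prod_root)
    then have "eigenvalue Gc a" using eigenvalue_root_char_poly[OF Gc_carrier] by simp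
    then show "Im a = 0 \<and> Re a \<ge> 0" by (rule eig_nonneg)
  qed
  then have "Re (prod_list as) \<ge> 0" using prod_list_nonneg_complex by blast
  then show ?thesis unfolding dp[unfolded detGc, symmetric] by simp
qed

end

theorem theorem3:
  fixes M N :: nat and fs :: "(nat \<Rightarrow> nat) list"
  assumes "M \<ge> 1" and "N \<ge> 1"
    and "\<forall>j < length fs. \<forall>x < M. (fs ! j) x < N"
    and "\<forall>i < length fs. \<forall>j < length fs. i \<noteq> j \<longrightarrow> (\<exists>x < M. (fs ! i) x \<noteq> (fs ! j) x)"
  shows "(unamb_dist (M * N) (map (std_oracle M N) fs) \<longleftrightarrow> det (Gamma M fs) > 0)
    \<and> ((M = N \<and> (\<forall>j < length fs. bij_betw (fs ! j) {0..<M} {0..<M})) \<longrightarrow>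
         (unamb_dist M (map (min_oracle M) fs) \<longleftrightarrow> det (Gamma M fs) > 0))"
proof (intro conjI impI)
  have MN: "M * N \<ge> 1" using assms(1,2) by simp
  have car: "\<forall>j<length (map (std_oracle M N) fs). map (std_oracle M N) fs ! j \<in> carrier_mat (M*N) (M*N)"
    by (simp add: std_oracle_def)
  have "unamb_dist (M * N) (map (std_oracle M N) fs) \<longleftrightarrow>
        (\<forall>c. gcond M N fs c \<longrightarrow> (\<forall>j<length fs. c j = 0))"
    unfolding ud_iff[OF MN car] std_cond[OF assms(2,3)] by simp
  also have "\<dots> \<longleftrightarrow> det (Gamma M fs) \<noteq> 0" by (rule indep_iff_det_ne0[OF assms(3)])
  also have "\<dots> \<longleftrightarrow> det (Gamma M fs) > 0" using det_nonneg[OF assms(3)] by linarith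
  finally show "unamb_dist (M * N) (map (std_oracle M N) fs) \<longleftrightarrow> det (Gamma M fs) > 0" .
next
  assume A: "M = N \<and> (\<forall>j < length fs. bij_betw (fs ! j) {0..<M} {0..<M})"
  have F: "\<forall>j < length fs. \<forall>x < M. (fs ! j) x < M"
  proof (intro allI impI)
    fix j x assume "j < length fs" "x < M"
    then show "(fs ! j) x < M" using A bij_betw_apply[of "fs ! j" "{0..<M}" "{0..<M}" x] by auto
  qed
  have car: "\<forall>j<length (map (min_oracle M) fs). map (min_oracle M) fs ! j \<in> carrier_mat M M"
    by (simp add: min_oracle_def)
  have "unamb_dist M (map (min_oracle M) fs) \<longleftrightarrow>
        (\<forall>c. gcond M M fs c \<longrightarrow> (\<forall>j<length fs. c j = 0))"
    unfolding ud_iff[OF assms(1) car] min_cond by simp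
  also have "\<dots> \<longleftrightarrow> det (Gamma M fs) \<noteq> 0" by (rule indep_iff_det_ne0[OF F])
  also have "\<dots> \<longleftrightarrow> det (Gamma M fs) > 0" using det_nonneg[OF F] by linarith
  finally show "unamb_dist M (map (min_oracle M) fs) \<longleftrightarrow> det (Gamma M fs) > 0" .
qed

end
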